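(* Let $\frac12<\beta<\frac54$ and $\alpha+\beta=\frac54$. Then for any $r>0$ there exists a constant $C>0$ such that for all $v\in V^{2\beta}\cap V^{r+\beta}$, \[ |\langle B(\Lambda^{-2\alpha}v,v),\Lambda^{2r}v\rangle|\le C\|v\|_{V^{2\beta}}\|v\|_{V^{r+\beta}}\|v\|_{V^r}. \]
   Context: On the torus $\mathbb T=[0,2\pi]^3$, for $s\in\mathbb R$, $V^s$ is the space of real periodic vector fields $w=\sum_{k\in\mathbb Z^3\setminus\{0\}}w_ke^{ik\cdot x}$, $w_k\in\mathbb C^3$, $w_{-k}=\overline{w_k}$, $w_k\cdot k=0$ (divergence free, zero mean), with $\|w\|_{V^s}^2=\sum_k|w_k|^2|k|^{2s}<\infty$. $\Lambda^s$ is the Fourier multiplier by $|k|^s$. $B(u,v)=\Pi((u\cdot\nabla)v)$ with $\Pi$ the Leray projection, and $\langle B(u,v),w\rangle=\int_{\mathbb T}((u\cdot\nabla)v)\cdot w\,dx$ (for $w$ divergence free) denotes the $L^2$ pairing. *)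

theory Defs
  imports "HOL-Analysis.Analysis"
begin

text \<open>Periodic vector fields on the torus [0,2pi]^3 are represented by their Fourier
coefficients: a field w is the function k \<mapsto> w_k from the lattice Z^3 (type int^3)
to C^3 (type complex^3), standing for the series sum_k w_k e^{i k.x}.\<close>

type_synonym lattice = "int ^ 3"
type_synonym coef = "complex ^ 3"
type_synonym field = "lattice \<Rightarrow> coef"

definition knorm :: "lattice \<Rightarrow> real" where
  "knorm k = sqrt (\<Sum>i\<in>UNIV. (real_of_int (k $ i))^2)"

definition cdot :: "coef \<Rightarrow> coef \<Rightarrow> complex" where
  "cdot a b = (\<Sum>i\<in>UNIV. a $ i * b $ i)"

definition kdot :: "coef \<Rightarrow> lattice \<Rightarrow> complex" where
  "kdot a k = (\<Sum>i\<in>UNIV. a $ i * of_int (k $ i))"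

text \<open>Real, zero-mean, divergence-free fields: w_0 = 0, w_{-k} = conj w_k, w_k . k = 0.\<close>
definition is_field :: "field \<Rightarrow> bool" where
  "is_field w \<longleftrightarrow> w 0 = 0 \<and> (\<forall>k. w (- k) = (\<chi> i. cnj (w k $ i))) \<and> (\<forall>k. kdot (w k) k = 0)"

definition Vweight :: "real \<Rightarrow> field \<Rightarrow> lattice \<Rightarrow> real" where
  "Vweight s w k = (norm (w k))^2 * (knorm k powr (2 * s))"

definition inV :: "real \<Rightarrow> field \<Rightarrow> bool" where
  "inV s w \<longleftrightarrow> is_field w \<and> (Vweight s w) summable_on (UNIV - {0})"

definition Vnorm :: "real \<Rightarrow> field \<Rightarrow> real" where
  "Vnorm s w = sqrt (\<Sum>\<^sub>\<infinity>k\<in>UNIV - {0}. Vweight s w k)"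

definition Lam :: "real \<Rightarrow> field \<Rightarrow> field" where
  "Lam s w = (\<lambda>k. if k = 0 then 0 else (knorm k powr s) *\<^sub>R w k)"

text \<open>The L^2 pairing <B(u,v),w> = int_T ((u.nabla) v) . w dx, written in Fourier variables
(Parseval): (u.nabla)v = sum_{j,l} i (u_j . l) v_l e^{i(j+l)x}, and integrating against
w = sum_m w_m e^{imx} over T yields (2 pi)^3 times the sum over j + l + m = 0.\<close>
definition Bpair :: "field \<Rightarrow> field \<Rightarrow> field \<Rightarrow> complex" where
  "Bpair u v w = (2 * of_real pi) ^ 3 *
     (\<Sum>\<^sub>\<infinity>(j, l)\<in>UNIV. \<i> * kdot (u j) l * cdot (v l) (w (- (j + l))))"

end

theory Submission
  imports Defs
begin



definition kv :: "lattice \<Rightarrow> real^3" where "kv k = (\<chi> i. real_of_int (k $ i))"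

lemma knorm_kv: "knorm k = norm (kv k)"
  unfolding knorm_def kv_def norm_vec_def L2_set_def by simp

lemma kv_add: "kv (j + l) = kv j + kv l" and kv_neg: "kv (- k) = - kv k"
  by (simp_all add: kv_def vec_eq_iff)

lemma knorm_nonneg: "knorm k \<ge> 0" by (simp add: knorm_kv)
lemma knorm_neg: "knorm (- k) = knorm k" by (simp add: knorm_kv kv_neg)
lemma knorm_triangle: "knorm (j + l) \<le> knorm j + knorm l"
  by (simp add: knorm_kv kv_add norm_triangle_ineq)
lemma knorm_zero: "knorm 0 = 0" by (simp add: knorm_def)

lemma knorm_ge1: assumes "k \<noteq> 0" shows "knorm k \<ge> 1"
proof -
  obtain i where i: "k $ i \<noteq> 0" using assms by (auto simp: vec_eq_iff)
  then have h: "1 \<le> \<bar>real_of_int (k $ i)\<bar>" by linarith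
  have "1 \<le> (real_of_int (k $ i))^2"
    using one_le_power[OF h, of 2] by (simp only: power2_abs)
  also have "\<dots> \<le> (\<Sum>i\<in>UNIV. (real_of_int (k $ i))^2)"
    by (rule member_le_sum) auto
  finally show ?thesis unfolding knorm_def by (simp add: real_le_rsqrt)
qed

lemma kdot_bound: "norm (kdot a k) \<le> norm a * knorm k"
proof -
  have "norm (kdot a k) \<le> (\<Sum>i\<in>UNIV. norm (a $ i) * \<bar>real_of_int (k $ i)\<bar>)"
    unfolding kdot_def by (rule order_trans[OF norm_sum]) (simp add: norm_mult)
  also have "\<dots> \<le> L2_set (\<lambda>i. norm (a $ i)) UNIV * L2_set (\<lambda>i. real_of_int (k $ i)) UNIV"
    using L2_set_mult_ineq[of "\<lambda>i. norm (a $ i)" "\<lambda>i. real_of_int (k $ i)" UNIV] by simp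
  also have "\<dots> = norm a * knorm k"
    by (simp add: norm_vec_def knorm_def L2_set_def)
  finally show ?thesis .
qed

lemma cdot_bound: "norm (cdot a b) \<le> norm a * norm b"
proof -
  have "norm (cdot a b) \<le> (\<Sum>i\<in>UNIV. norm (a $ i) * norm (b $ i))"
    unfolding cdot_def by (rule order_trans[OF norm_sum]) (simp add: norm_mult)
  also have "\<dots> \<le> L2_set (\<lambda>i. norm (a $ i)) UNIV * L2_set (\<lambda>i. norm (b $ i)) UNIV"
    using L2_set_mult_ineq[of "\<lambda>i. norm (a $ i)" "\<lambda>i. norm (b $ i)" UNIV] by simp
  also have "\<dots> = norm a * norm b"
    by (simp add: norm_vec_def)
  finally show ?thesis .
qed

lemma kdot_add: "kdot a (j + l) = kdot a j + kdot a l"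
  by (simp add: kdot_def distrib_left sum.distrib)
lemma kdot_neg: "kdot a (- k) = - kdot a k"
  by (simp add: kdot_def sum_negf)
lemma kdot_scale: "kdot (c *\<^sub>R a) k = of_real c * kdot a k"
  unfolding kdot_def vector_scaleR_component by (simp add: sum_distrib_left scaleR_conv_of_real mult.assoc)
lemma cdot_comm: "cdot a b = cdot b a"
  by (simp add: cdot_def mult.commute)
lemma cdot_scale: "cdot a (c *\<^sub>R b) = of_real c * cdot a b"
  unfolding cdot_def vector_scaleR_component by (simp add: sum_distrib_left scaleR_conv_of_real mult.left_commute)




lemma amgm_bound:
  fixes X A B :: real
  assumes A: "A \<ge> 0" and B: "B \<ge> 0" and H: "\<And>t. t > 0 \<Longrightarrow> X \<le> (t * A + B / t) / 2"
  shows "X \<le> sqrt A * sqrt B"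
proof (cases "A > 0 \<and> B > 0")
  case True
  define t where "t = sqrt B / sqrt A"
  have tp: "t > 0" using True by (simp add: t_def)
  have "t * A = sqrt A * sqrt B" using True unfolding t_def
    by (metis less_eq_real_def real_div_sqrt times_divide_eq_left mult.commute)
  moreover have "B / t = sqrt A * sqrt B" using True unfolding t_def
    by (metis divide_divide_eq_right less_eq_real_def real_div_sqrt mult.commute times_divide_eq_right)
  ultimately show ?thesis using H[OF tp] by simp
next
  case False
  then have z: "A = 0 \<or> B = 0" using A B by linarith
  show ?thesis
  proof (rule ccontr)
    assume "\<not> ?thesis"
    then have Xp: "X > 0" using z by auto
    show False
    proof (cases "A = 0")
      case True
      define t where "t = B / X + 1"
      have tp: "t > 0" using B Xp unfolding t_def by (smt (verit) divide_nonneg_pos)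
      have "B / t < X"
      proof -
        have "B < X * t" using Xp B by (simp add: t_def algebra_simps)
        then show ?thesis using tp by (simp add: divide_less_eq)
      qed
      moreover have "2 * X \<le> B / t" using H[OF tp] True by simp
      ultimately show False using Xp by linarith
    next
      case False
      then have Bz: "B = 0" using z by simp
      define t where "t = X / (A + 1)"
      have tp: "t > 0" using A Xp by (simp add: t_def)
      have "t * A < X"
      proof -
        have "X * A < X * (A + 1)" using Xp by simp
        then show ?thesis using A by (simp add: t_def field_simps)
      qed
      then show False using H[OF tp] Bz A tp Xp by simp
    qed
  qed
qed

lemma amgm_pt:
  fixes F G H t :: real
  assumes "F \<ge> 0" "t > 0"
  shows "F * G * H \<le> F * ((t * G^2 + H^2 / t) / 2)"
proof -
  have "2 * G * H \<le> t * G^2 + H^2 / t"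
  proof -
    have "0 \<le> (t * G - H)^2 / t" using assms by simp
    also have "(t * G - H)^2 / t = t * G^2 + H^2 / t - 2 * G * H"
      using assms by (simp add: field_simps power2_eq_square)
    finally show ?thesis by simp
  qed
  then have "G * H \<le> (t * G^2 + H^2 / t) / 2" by simp
  from mult_left_mono[OF this assms(1)] show ?thesis by (simp add: mult.assoc)
qed

lemma bij_negsum: "bij (\<lambda>l::lattice. - (j + l))"
  by (rule bij_betwI[where g = "\<lambda>l. - (j + l)"]) (auto simp: algebra_simps)

lemma young:
  fixes F G H :: "lattice \<Rightarrow> real"
  assumes Fn: "\<And>k. F k \<ge> 0" and Gn: "\<And>k. G k \<ge> 0" and Hn: "\<And>k. H k \<ge> 0"
    and Fs: "F summable_on UNIV"
    and Gs: "(\<lambda>k. (G k)^2) summable_on UNIV" and Hs: "(\<lambda>k. (H k)^2) summable_on UNIV"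
  shows "(\<lambda>(j,l). F j * G l * H (- (j + l))) summable_on UNIV"
    and "(\<Sum>\<^sub>\<infinity>(j,l). F j * G l * H (- (j + l)))
          \<le> (\<Sum>\<^sub>\<infinity>k. F k) * sqrt (\<Sum>\<^sub>\<infinity>k. (G k)^2) * sqrt (\<Sum>\<^sub>\<infinity>k. (H k)^2)"
proof -
  define a where "a = (\<Sum>\<^sub>\<infinity>k. F k)"
  define b where "b = (\<Sum>\<^sub>\<infinity>k. (G k)^2)"
  define c where "c = (\<Sum>\<^sub>\<infinity>k. (H k)^2)"
  have a0: "a \<ge> 0" unfolding a_def by (simp add: Fn infsum_nonneg)
  have b0: "b \<ge> 0" unfolding b_def by (simp add: infsum_nonneg)
  have c0: "c \<ge> 0" unfolding c_def by (simp add: infsum_nonneg)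
  define Q where "Q t = (\<lambda>(j,l). F j * ((t * (G l)^2 + (H (- (j + l)))^2 / t) / 2))" for t
  have Hsh: "((\<lambda>l. (H (- (j + l)))^2) has_sum c) UNIV" for j
  proof -
    have "(\<lambda>l. (H (- (j + l)))^2) summable_on UNIV \<longleftrightarrow> (\<lambda>k. (H k)^2) summable_on UNIV"
      using summable_on_reindex_bij_betw[OF bij_negsum[of j], of "\<lambda>k. (H k)^2"] by simp
    moreover have "(\<Sum>\<^sub>\<infinity>l. (H (- (j + l)))^2) = c"
      using infsum_reindex_bij_betw[OF bij_negsum[of j], of "\<lambda>k. (H k)^2"] by (simp add: c_def)
    ultimately show ?thesis using Hs by (metis has_sum_infsum)
  qed
  have inner: "((\<lambda>l. Q t (j, l)) has_sum F j * ((t * b + c / t) / 2)) UNIV" for t j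
  proof -
    have g: "((\<lambda>l. t * (G l)^2) has_sum t * b) UNIV"
      using has_sum_cmult_right[OF has_sum_infsum[OF Gs]] by (simp add: b_def)
    have h: "((\<lambda>l. (H (- (j + l)))^2 / t) has_sum c / t) UNIV"
      using has_sum_cmult_right[OF Hsh[of j], of "1/t"] by simp
    have "((\<lambda>l. (t * (G l)^2 + (H (- (j + l)))^2 / t) / 2) has_sum ((t * b + c / t) / 2)) UNIV"
      using has_sum_cmult_right[OF has_sum_add[OF g h], of "1/2"] by simp
    from has_sum_cmult_right[OF this, of "F j"] show ?thesis by (simp add: Q_def)
  qed
  have outer: "((\<lambda>j. F j * ((t * b + c / t) / 2)) has_sum a * ((t * b + c / t) / 2)) UNIV" for t
    using has_sum_cmult_left[OF has_sum_infsum[OF Fs], of "(t * b + c / t) / 2"] unfolding a_def .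
  have Qs: "Q t summable_on UNIV" if "t > 0" for t
  proof -
    have "Q t summable_on Sigma UNIV (\<lambda>_. UNIV)"
      by (rule summable_on_SigmaI[OF inner]) (use outer that Fn b0 c0 in \<open>auto simp: Q_def summable_on_def intro!: mult_nonneg_nonneg add_nonneg_nonneg\<close>)
    then show ?thesis by simp
  qed
  have Qsum: "(Q t has_sum a * ((t * b + c / t) / 2)) UNIV" if "t > 0" for t
  proof -
    have "(Q t has_sum a * ((t * b + c / t) / 2)) (Sigma UNIV (\<lambda>_. UNIV))"
      by (rule has_sum_SigmaI[OF inner outer]) (use Qs[OF that] in simp)
    then show ?thesis by simp
  qed
  have pt: "(\<lambda>(j,l). F j * G l * H (- (j + l))) x \<le> Q t x" if "t > 0" for t x
    using amgm_pt[OF Fn that] by (cases x) (simp add: Q_def)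
  have nn: "0 \<le> (\<lambda>(j,l). F j * G l * H (- (j + l))) x" for x
    using Fn Gn Hn by (cases x) simp
  show S: "(\<lambda>(j,l). F j * G l * H (- (j + l))) summable_on UNIV"
    by (rule summable_on_comparison_test[OF Qs[of 1]]) (use pt nn in auto)
  have "(\<Sum>\<^sub>\<infinity>(j,l). F j * G l * H (- (j + l))) \<le> sqrt (a * b) * sqrt (a * c)"
  proof (rule amgm_bound)
    fix t :: real assume tp: "t > 0"
    have "(\<Sum>\<^sub>\<infinity>(j,l). F j * G l * H (- (j + l))) \<le> (\<Sum>\<^sub>\<infinity>x. Q t x)"
      by (rule infsum_mono[OF S Qs[OF tp]]) (use pt tp in auto)
    also have "\<dots> = a * ((t * b + c / t) / 2)" using Qsum[OF tp] by (simp add: infsumI)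
    also have "\<dots> = (t * (a * b) + (a * c) / t) / 2" by (simp add: field_simps)
    finally show "(\<Sum>\<^sub>\<infinity>(j,l). F j * G l * H (- (j + l))) \<le> (t * (a * b) + (a * c) / t) / 2" .
  qed (use a0 b0 c0 in auto)
  also have "\<dots> = a * sqrt b * sqrt c" using a0 by (simp add: real_sqrt_mult)
  finally show "(\<Sum>\<^sub>\<infinity>(j,l). F j * G l * H (- (j + l))) \<le> (\<Sum>\<^sub>\<infinity>k. F k) * sqrt (\<Sum>\<^sub>\<infinity>k. (G k)^2) * sqrt (\<Sum>\<^sub>\<infinity>k. (H k)^2)"
    by (simp add: a_def b_def c_def)
qed




definition g1 :: "int \<Rightarrow> real" where "g1 n = (1 + (real_of_int n)^2) powr (-2/3)"

lemma g1_nonneg: "g1 n \<ge> 0" by (simp add: g1_def)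

lemma g1_nat_summable: "summable (\<lambda>n::nat. g1 (int n))"
proof (rule summable_comparison_test')
  show "summable (\<lambda>n::nat. real n powr (-4/3))" by (simp add: summable_real_powr_iff)
  fix n :: nat assume n: "n \<ge> 1"
  have "g1 (int n) \<le> ((real n)^2) powr (-2/3)"
    unfolding g1_def using n by (intro powr_mono2') auto
  also have "\<dots> = real n powr (-4/3)"
  proof -
    have "(real n)^2 = real n powr 2" using n by (simp add: powr_numeral)
    then have "((real n)^2) powr (-2/3) = real n powr (2 * (-2/3))" using powr_powr by metis
    then show ?thesis by simp
  qed
  finally show "norm (g1 (int n)) \<le> real n powr (-4/3)" using g1_nonneg by simp
qed

lemma g1_summable: "g1 summable_on (UNIV :: int set)"
proof -
  have s: "(\<lambda>n::nat. g1 (int n)) summable_on UNIV"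
    by (rule summable_on_UNIV_nonneg_real_iff[THEN iffD2]) (auto simp: g1_nonneg g1_nat_summable)
  have i1: "inj_on int UNIV" by (simp add: inj_on_def)
  have A: "g1 summable_on (range int)"
    using summable_on_reindex[OF i1, of g1] s by (simp add: comp_def)
  have i2: "inj_on (\<lambda>n::nat. - int n) UNIV" by (simp add: inj_on_def)
  have s': "(\<lambda>n::nat. g1 (- int n)) summable_on UNIV" using s by (simp add: g1_def)
  have B: "g1 summable_on (range (\<lambda>n::nat. - int n))"
    using summable_on_reindex[OF i2, of g1] s' by (simp add: comp_def)
  have U: "range int \<union> range (\<lambda>n::nat. - int n) = (UNIV :: int set)"
  proof -
    have "x \<in> range int \<union> range (\<lambda>n::nat. - int n)" for x :: int
    proof (cases "x \<ge> 0")
      case True then have "x = int (nat x)" by simp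
      then show ?thesis by (intro UnI1) (rule range_eqI)
    next
      case False then have "x = - int (nat (- x))" by simp
      then show ?thesis by (intro UnI2) (rule range_eqI)
    qed
    then show ?thesis by blast
  qed
  show ?thesis using summable_on_union[OF A B] unfolding U .
qed

lemma prod_summable:
  fixes f :: "'a \<Rightarrow> real" and g :: "'b \<Rightarrow> real"
  assumes "\<And>x. f x \<ge> 0" "\<And>y. g y \<ge> 0" "f summable_on UNIV" "g summable_on UNIV"
  shows "(\<lambda>(x,y). f x * g y) summable_on UNIV"
proof -
  have "(\<lambda>(x,y). f x * g y) summable_on Sigma UNIV (\<lambda>_. UNIV)"
  proof (rule summable_on_SigmaI)
    show "((\<lambda>y. (\<lambda>(x,y). f x * g y) (x, y)) has_sum f x * infsum g UNIV) UNIV" for x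
      using has_sum_cmult_right[OF has_sum_infsum[OF assms(4)], of "f x"] by simp
    show "(\<lambda>x. f x * infsum g UNIV) summable_on UNIV"
      using summable_on_cmult_left[OF assms(3)] by simp
  qed (use assms in auto)
  then show ?thesis by simp
qed

definition G3 :: "lattice \<Rightarrow> real" where "G3 k = g1 (k $ 1) * (g1 (k $ 2) * g1 (k $ 3))"

lemma G3_summable: "G3 summable_on UNIV"
proof -
  have s2: "(\<lambda>(b,c). g1 b * g1 c) summable_on UNIV"
    by (rule prod_summable) (auto simp: g1_nonneg g1_summable)
  have s3: "(\<lambda>(a,bc). g1 a * (\<lambda>(b,c). g1 b * g1 c) bc) summable_on UNIV"
    by (rule prod_summable) (use s2 in \<open>auto simp: g1_nonneg g1_summable\<close>)
  show ?thesis
  proof (subst summable_on_reindex_bij_witness[where i = "\<lambda>(a,b,c). vector [a,b,c]" and j = "\<lambda>k. (k$1, k$2, k$3)" and T = UNIV and h = "(\<lambda>(a,bc). g1 a * (\<lambda>(b,c). g1 b * g1 c) bc)"])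
    show "\<And>k::lattice. k \<in> UNIV \<Longrightarrow> (\<lambda>(a,b,c). vector [a,b,c]) (k$1, k$2, k$3) = k"
      by (simp add: vec_eq_iff forall_3)
  qed (use s3 in \<open>auto simp: G3_def\<close>)
qed

lemma knorm_sq: "(knorm k)^2 = (real_of_int (k$1))^2 + (real_of_int (k$2))^2 + (real_of_int (k$3))^2"
  unfolding knorm_def by (simp add: sum_3 add_nonneg_nonneg)

lemma lattice_sum:
  fixes p :: real assumes p: "p \<ge> 4"
  shows "(\<lambda>k. knorm k powr (- p)) summable_on (UNIV - {0})"
proof (rule summable_on_comparison_test)
  show "(\<lambda>k. 4 * G3 k) summable_on (UNIV - {0})"
    using summable_on_cmult_right[OF G3_summable, of 4] summable_on_subset by blast
  fix k :: lattice assume "k \<in> UNIV - {0}"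
  then have k1: "knorm k \<ge> 1" using knorm_ge1 by auto
  define s where "s = (knorm k)^2"
  have s1: "s \<ge> 1" using k1 by (simp add: s_def one_le_power)
  have e: "1 + (real_of_int (k$i))^2 \<le> 2 * s" for i
  proof -
    have "(real_of_int (k$i))^2 \<le> s"
      unfolding s_def knorm_def using member_le_sum[of i UNIV "\<lambda>i. (real_of_int (k$i))^2"]
      by (simp add: sum_nonneg)
    then show ?thesis using s1 by linarith
  qed
  define P where "P = (1 + (real_of_int (k$1))^2) * ((1 + (real_of_int (k$2))^2) * (1 + (real_of_int (k$3))^2))"
  have "1 * (1 * 1) \<le> P" unfolding P_def by (intro mult_mono) (auto simp: add_nonneg_nonneg)
  then have P1: "P \<ge> 1" by simp
  have PS: "P \<le> 8 * s^3"
  proof -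
    have "P \<le> (2 * s) * ((2 * s) * (2 * s))" unfolding P_def
      by (intro mult_mono e) (use s1 in \<open>auto simp: add_nonneg_nonneg mult_nonneg_nonneg\<close>)
    then show ?thesis by (simp add: power3_eq_cube)
  qed
  have G3P: "G3 k = P powr (-2/3)"
    unfolding G3_def g1_def P_def by (simp add: powr_mult add_pos_nonneg)
  have "knorm k powr (- p) \<le> knorm k powr (-4)"
    using k1 p by (intro powr_mono) auto
  also have "\<dots> = s powr (-2)"
  proof -
    have "s = knorm k powr 2" unfolding s_def using k1 by (simp add: powr_numeral)
    then have "s powr (-2) = knorm k powr (2 * (-2))" by (simp only: powr_powr)
    then show ?thesis by simp
  qed
  also have "\<dots> = 4 * (8 * s^3) powr (-2/3)"
  proof -
    have A: "(8 * s^3) powr (-2/3) = 8 powr (-2/3) * (s^3) powr (-2/3)"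
      by (rule powr_mult)
    have s3: "s^3 = s powr 3" using s1 by (simp add: powr_numeral)
    have B: "(s^3) powr (-2/3) = s powr (-2)"
    proof -
      have "(s powr 3) powr (-2/3) = s powr (3 * (-2/3))" by (rule powr_powr)
      also have "(3::real) * (-2/3) = - 2" by simp
      finally have "(s powr 3) powr (-2/3) = s powr (-2)" .
      then show ?thesis unfolding s3 .
    qed
    have C: "8 powr (-2/3) = (1/4::real)"
    proof -
      have e8: "(2::real) powr 3 = 8" by (simp add: powr_numeral)
      have "(8::real) powr (-2/3) = (2 powr 3) powr (-2/3)" by (simp only: e8)
      also have "\<dots> = 2 powr (3 * (-2/3))" by (rule powr_powr)
      also have "(3::real) * (-2/3) = - 2" by simp
      also have "(2::real) powr (- 2) = 1 / 2 powr 2" by (rule powr_minus_divide)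
      also have "(2::real) powr 2 = 4" by (simp add: powr_numeral)
      finally show ?thesis by simp
    qed
    show ?thesis by (subst A, subst B, subst C) simp
  qed
  also have "\<dots> \<le> 4 * P powr (-2/3)"
    using P1 PS by (intro mult_left_mono powr_mono2') auto
  finally show "knorm k powr (- p) \<le> 4 * G3 k" by (simp add: G3P)
qed simp




lemma powr_deriv_bound:
  fixes s y c :: real
  assumes s: "s > 0" and y: "y > 0" and c1: "y / 2 \<le> c" and c2: "c \<le> 2 * y"
  shows "c powr (s - 1) \<le> 2 powr \<bar>s - 1\<bar> * y powr (s - 1)"
proof (cases "s - 1 \<ge> 0")
  case True
  have "c powr (s - 1) \<le> (2 * y) powr (s - 1)"
    using True c1 c2 y by (intro powr_mono2) auto
  also have "\<dots> = 2 powr (s - 1) * y powr (s - 1)" by (rule powr_mult)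
  finally show ?thesis using True by simp
next
  case False
  have "c powr (s - 1) \<le> (y / 2) powr (s - 1)"
    using False c1 c2 y by (intro powr_mono2') auto
  also have "\<dots> = y powr (s - 1) / 2 powr (s - 1)" using y by (simp add: powr_divide)
  also have "\<dots> = 2 powr (- (s - 1)) * y powr (s - 1)" by (subst powr_minus_divide) simp
  finally show ?thesis using False by simp
qed

lemma mvt_powr_le:
  fixes s y a b :: real
  assumes s: "s > 0" and y: "y > 0" and a1: "y / 2 \<le> a" and ab: "a \<le> b" and b2: "b \<le> 2 * y"
  shows "\<bar>b powr s - a powr s\<bar> \<le> s * 2 powr \<bar>s - 1\<bar> * y powr (s - 1) * \<bar>b - a\<bar>"
proof (cases "a = b")
  case True then show ?thesis by simp
next
  case False
  then have lt: "a < b" using ab by simp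
  have apos: "a > 0" using a1 y by linarith
  have "\<exists>c. a < c \<and> c < b \<and> (b powr s - a powr s = (b - a) * (s * c powr (s - 1)))"
  proof (rule MVT2[OF lt])
    fix x assume "a \<le> x" "x \<le> b"
    then have "x > 0" using apos by linarith
    then show "((\<lambda>t. t powr s) has_real_derivative s * x powr (s - 1)) (at x)"
      by (rule has_real_derivative_powr)
  qed
  then obtain c where c: "a < c" "c < b" "b powr s - a powr s = (b - a) * (s * c powr (s - 1))" by blast
  have cb: "c powr (s - 1) \<le> 2 powr \<bar>s - 1\<bar> * y powr (s - 1)"
    using c a1 b2 by (intro powr_deriv_bound[OF s y]) auto
  have "\<bar>b powr s - a powr s\<bar> = \<bar>b - a\<bar> * (s * c powr (s - 1))"
    using c s by (simp add: abs_mult)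
  also have "\<dots> \<le> \<bar>b - a\<bar> * (s * (2 powr \<bar>s - 1\<bar> * y powr (s - 1)))"
    using cb s by (intro mult_left_mono) auto
  finally show ?thesis by (simp add: ac_simps)
qed

lemma mvt_powr:
  fixes s y a b :: real
  assumes s: "s > 0" and y: "y > 0" and a1: "y / 2 \<le> a" and a2: "a \<le> 2 * y"
    and b1: "y / 2 \<le> b" and b2: "b \<le> 2 * y"
  shows "\<bar>b powr s - a powr s\<bar> \<le> s * 2 powr \<bar>s - 1\<bar> * y powr (s - 1) * \<bar>b - a\<bar>"
proof (cases "a \<le> b")
  case True show ?thesis by (rule mvt_powr_le[OF s y a1 True b2])
next
  case False
  then have "b \<le> a" by simp
  from mvt_powr_le[OF s y b1 this a2] show ?thesis by (simp add: abs_minus_commute)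
qed




lemma pw_mul1: "(x::real) > 0 \<Longrightarrow> x powr a * x = x powr (a + 1)"
  by (simp add: powr_add)

lemma pw_add: "(x::real) powr a * x powr b = x powr (a + b)"
  by (simp add: powr_add)

lemma caseA:
  fixes x y z r \<beta> :: real
  assumes x1: "x \<ge> 1" and y1: "y \<ge> 1" and z1: "z \<ge> 1"
    and t1: "z \<le> x + y" and t2: "y \<le> x + z"
    and r: "r > 0" and b1: "\<beta> > 0"
    and A: "x \<le> y / 2"
  shows "x powr (2*\<beta> - 5/2) * y * \<bar>z powr (2*r) - y powr (2*r)\<bar>
         \<le> (2*r * 2 powr \<bar>2*r - 1\<bar> * 2 powr r) * (x powr (\<beta> - 3/2) * y powr (r + \<beta>) * z powr r)"
proof -
  define c0 where "c0 = 2*r * 2 powr \<bar>2*r - 1\<bar>"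
  have c0: "c0 \<ge> 0" using r by (simp add: c0_def)
  have xp: "x > 0" "y > 0" "z > 0" using x1 y1 z1 by auto
  have zl: "y / 2 \<le> z" using t2 A by linarith
  have zu: "z \<le> 2 * y" using t1 A y1 by linarith
  have D: "\<bar>z powr (2*r) - y powr (2*r)\<bar> \<le> c0 * y powr (2*r - 1) * x"
  proof -
    have "\<bar>z powr (2*r) - y powr (2*r)\<bar> \<le> c0 * y powr (2*r - 1) * \<bar>z - y\<bar>"
      unfolding c0_def using mvt_powr[of "2*r" y y z] r xp zl zu by auto
    also have "\<dots> \<le> c0 * y powr (2*r - 1) * x"
      using t1 t2 c0 by (intro mult_left_mono) auto
    finally show ?thesis .
  qed
  have "x powr (2*\<beta> - 5/2) * y * \<bar>z powr (2*r) - y powr (2*r)\<bar>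
      \<le> x powr (2*\<beta> - 5/2) * y * (c0 * y powr (2*r - 1) * x)"
    using D xp by (intro mult_left_mono) auto
  also have "\<dots> = c0 * (x powr (2*\<beta> - 5/2) * x) * (y powr (2*r - 1) * y)"
    by (simp add: ac_simps)
  also have "\<dots> = c0 * x powr (2*\<beta> - 3/2) * y powr (2*r)"
    using xp by (simp add: pw_mul1)
  also have "x powr (2*\<beta> - 3/2) = x powr (\<beta> - 3/2) * x powr \<beta>"
    by (simp add: pw_add)
  also have "c0 * (x powr (\<beta> - 3/2) * x powr \<beta>) * y powr (2*r)
      \<le> c0 * (x powr (\<beta> - 3/2) * y powr \<beta>) * y powr (2*r)"
    using c0 b1 xp A by (intro mult_right_mono mult_left_mono powr_mono2) auto
  also have "y powr \<beta> * y powr (2*r) = y powr (r + \<beta>) * y powr r"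
    by (simp add: pw_add add_ac)
  then have "c0 * (x powr (\<beta> - 3/2) * y powr \<beta>) * y powr (2*r)
      = c0 * x powr (\<beta> - 3/2) * y powr (r + \<beta>) * y powr r"
    by (simp add: ac_simps)
  also have "\<dots> \<le> c0 * x powr (\<beta> - 3/2) * y powr (r + \<beta>) * (2 powr r * z powr r)"
  proof -
    have "y powr r \<le> (2 * z) powr r" using r xp zl by (intro powr_mono2) auto
    also have "\<dots> = 2 powr r * z powr r" by (rule powr_mult)
    finally show ?thesis using c0 by (intro mult_left_mono) auto
  qed
  also have "\<dots> = (c0 * 2 powr r) * (x powr (\<beta> - 3/2) * y powr (r + \<beta>) * z powr r)"
    by (simp add: ac_simps)
  finally show ?thesis by (simp add: c0_def)
qed




lemma caseB:
  fixes x y z r \<beta> :: real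
  assumes x1: "x \<ge> 1" and y1: "y \<ge> 1" and z1: "z \<ge> 1"
    and t2: "y \<le> x + z"
    and r: "r > 0" and b1: "\<beta> > 0" and b2: "\<beta> < 5/4"
    and B: "z \<le> y / 2"
  shows "x powr (2*\<beta> - 5/2) * y * \<bar>z powr (2*r) - y powr (2*r)\<bar>
         \<le> (2 powr (5/2 - 2*\<beta>) * 2 powr r) * (z powr (\<beta> - 3/2) * y powr (r + \<beta>) * x powr r)"
proof -
  have xp: "x > 0" "y > 0" "z > 0" using x1 y1 z1 by auto
  have xl: "y / 2 \<le> x" using t2 B by linarith
  have zy: "z \<le> y" using B xp by linarith
  define E where "E = 2*\<beta> - 3/2 + 2*r"
  have D: "\<bar>z powr (2*r) - y powr (2*r)\<bar> \<le> y powr (2*r)"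
  proof -
    have "z powr (2*r) \<le> y powr (2*r)" using zy xp r by (intro powr_mono2) auto
    then show ?thesis by simp
  qed
  have X: "x powr (2*\<beta> - 5/2) \<le> 2 powr (5/2 - 2*\<beta>) * y powr (2*\<beta> - 5/2)"
  proof -
    have "x powr (2*\<beta> - 5/2) \<le> (y / 2) powr (2*\<beta> - 5/2)"
      using xl xp b2 by (intro powr_mono2') auto
    also have "\<dots> = y powr (2*\<beta> - 5/2) / 2 powr (2*\<beta> - 5/2)" using xp by (simp add: powr_divide)
    also have "\<dots> = 2 powr (- (2*\<beta> - 5/2)) * y powr (2*\<beta> - 5/2)" by (subst powr_minus_divide) simp
    finally show ?thesis by simp
  qed
  have "x powr (2*\<beta> - 5/2) * y * \<bar>z powr (2*r) - y powr (2*r)\<bar>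
      \<le> (2 powr (5/2 - 2*\<beta>) * y powr (2*\<beta> - 5/2)) * y * y powr (2*r)"
    using X D xp by (intro mult_mono) auto
  also have "\<dots> = 2 powr (5/2 - 2*\<beta>) * ((y powr (2*\<beta> - 5/2) * y) * y powr (2*r))"
    by (simp add: ac_simps)
  also have "\<dots> = 2 powr (5/2 - 2*\<beta>) * y powr E"
    using xp by (simp add: pw_mul1 pw_add E_def)
  also have "y powr E \<le> 2 powr r * (z powr (\<beta> - 3/2) * y powr (r + \<beta>) * x powr r)"
  proof -
    have z': "y powr (\<beta> - 3/2) \<le> z powr (\<beta> - 3/2)" using zy xp b2 by (intro powr_mono2') auto
    have x': "y powr r / 2 powr r \<le> x powr r"
    proof -
      have "(y / 2) powr r \<le> x powr r" using xl xp r by (intro powr_mono2) auto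
      then show ?thesis using xp by (simp add: powr_divide)
    qed
    have "y powr E = 2 powr r * (y powr (\<beta> - 3/2) * y powr (r + \<beta>) * (y powr r / 2 powr r))"
      by (simp add: pw_add E_def) (simp add: algebra_simps)
    also have "\<dots> \<le> 2 powr r * (z powr (\<beta> - 3/2) * y powr (r + \<beta>) * x powr r)"
      using z' x' by (intro mult_left_mono mult_mono) auto
    finally show ?thesis .
  qed
  finally show ?thesis by (simp add: mult_left_mono ac_simps)
qed

lemma caseC:
  fixes x y z r \<beta> :: real
  assumes x1: "x \<ge> 1" and y1: "y \<ge> 1" and z1: "z \<ge> 1"
    and t1: "z \<le> x + y" and t3: "x \<le> y + z"
    and r: "r > 0" and b1: "\<beta> > 0" and b2: "\<beta> < 5/4"
    and C1: "y / 2 < x" and C2: "y / 2 < z"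
  shows "x powr (2*\<beta> - 5/2) * y * \<bar>z powr (2*r) - y powr (2*r)\<bar>
         \<le> (2 powr (2*r) * 2 powr (5/2 - \<beta>) * 3 powr \<bar>r - \<beta>\<bar>) * (y powr (\<beta> - 3/2) * z powr (r + \<beta>) * x powr r)"
proof -
  have xp: "x > 0" "y > 0" "z > 0" using x1 y1 z1 by auto
  have D: "\<bar>z powr (2*r) - y powr (2*r)\<bar> \<le> 2 powr (2*r) * z powr (2*r)"
  proof -
    have a: "y powr (2*r) \<le> (2*z) powr (2*r)" using C2 xp r by (intro powr_mono2) auto
    have b: "z powr (2*r) \<le> (2*z) powr (2*r)" using xp r by (intro powr_mono2) auto
    have c: "0 \<le> z powr (2*r)" "0 \<le> y powr (2*r)" by simp_all
    have "\<bar>z powr (2*r) - y powr (2*r)\<bar> \<le> (2*z) powr (2*r)" using a b c by (smt (verit))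
    then show ?thesis by (simp add: powr_mult)
  qed
  have Y: "y \<le> 2 powr (5/2 - \<beta>) * x powr (5/2 - \<beta>) * y powr (\<beta> - 3/2)"
  proof -
    have "y powr (5/2 - \<beta>) \<le> (2*x) powr (5/2 - \<beta>)" using C1 xp b2 by (intro powr_mono2) auto
    then have "y powr (5/2 - \<beta>) * y powr (\<beta> - 3/2) \<le> (2*x) powr (5/2 - \<beta>) * y powr (\<beta> - 3/2)"
      by (intro mult_right_mono) auto
    moreover have "y powr (5/2 - \<beta>) * y powr (\<beta> - 3/2) = y" using xp by (simp add: pw_add)
    ultimately show ?thesis by (simp add: powr_mult)
  qed
  have Z: "z powr (r - \<beta>) \<le> 3 powr \<bar>r - \<beta>\<bar> * x powr (r - \<beta>)"
  proof (cases "r \<ge> \<beta>")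
    case True
    have "z powr (r - \<beta>) \<le> (3*x) powr (r - \<beta>)" using True t1 C1 xp by (intro powr_mono2) auto
    then show ?thesis using True by (simp add: powr_mult)
  next
    case False
    have "z powr (r - \<beta>) \<le> (x/3) powr (r - \<beta>)" using False t3 C2 xp by (intro powr_mono2') auto
    also have "\<dots> = x powr (r - \<beta>) / 3 powr (r - \<beta>)" using xp by (simp add: powr_divide)
    also have "\<dots> = 3 powr (- (r - \<beta>)) * x powr (r - \<beta>)" by (subst powr_minus_divide) simp
    finally show ?thesis using False by simp
  qed
  have "x powr (2*\<beta> - 5/2) * y * \<bar>z powr (2*r) - y powr (2*r)\<bar>
      \<le> x powr (2*\<beta> - 5/2) * (2 powr (5/2 - \<beta>) * x powr (5/2 - \<beta>) * y powr (\<beta> - 3/2))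
          * (2 powr (2*r) * (z powr (r + \<beta>) * z powr (r - \<beta>)))"
  proof -
    have "z powr (2*r) = z powr (r + \<beta>) * z powr (r - \<beta>)" by (simp add: pw_add)
    then show ?thesis using D Y xp by (intro mult_mono) auto
  qed
  also have "\<dots> \<le> x powr (2*\<beta> - 5/2) * (2 powr (5/2 - \<beta>) * x powr (5/2 - \<beta>) * y powr (\<beta> - 3/2))
          * (2 powr (2*r) * (z powr (r + \<beta>) * (3 powr \<bar>r - \<beta>\<bar> * x powr (r - \<beta>))))"
    using Z by (intro mult_left_mono) auto
  also have "\<dots> = (2 powr (2*r) * 2 powr (5/2 - \<beta>) * 3 powr \<bar>r - \<beta>\<bar>)
        * (y powr (\<beta> - 3/2) * z powr (r + \<beta>) * (x powr (2*\<beta> - 5/2) * x powr (5/2 - \<beta>) * x powr (r - \<beta>)))"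
    by (simp add: ac_simps)
  also have "x powr (2*\<beta> - 5/2) * x powr (5/2 - \<beta>) * x powr (r - \<beta>) = x powr r"
    by (simp add: pw_add)
  finally show ?thesis .
qed




definition Kc :: "real \<Rightarrow> real \<Rightarrow> real" where
  "Kc r \<beta> = 2*r * 2 powr \<bar>2*r - 1\<bar> * 2 powr r + 2 powr (5/2 - 2*\<beta>) * 2 powr r
     + 2 powr (2*r) * 2 powr (5/2 - \<beta>) * 3 powr \<bar>r - \<beta>\<bar>"

lemma Kc_pos: "r > 0 \<Longrightarrow> Kc r \<beta> > 0"
  unfolding Kc_def by (intro add_pos_pos add_nonneg_pos mult_pos_pos) auto

lemma kernel0:
  fixes x y z r \<beta> :: real
  assumes x1: "x \<ge> 1" and y1: "y \<ge> 1" and z1: "z \<ge> 1"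
    and t1: "z \<le> x + y" and t2: "y \<le> x + z" and t3: "x \<le> y + z"
    and r: "r > 0" and b1: "\<beta> > 0" and b2: "\<beta> < 5/4"
  shows "x powr (2*\<beta> - 5/2) * y * \<bar>z powr (2*r) - y powr (2*r)\<bar>
     \<le> Kc r \<beta> * (x powr (\<beta> - 3/2) * y powr (r + \<beta>) * z powr r
              + z powr (\<beta> - 3/2) * y powr (r + \<beta>) * x powr r
              + y powr (\<beta> - 3/2) * z powr (r + \<beta>) * x powr r)"
proof -
  define K1 where "K1 = 2*r * 2 powr \<bar>2*r - 1\<bar> * 2 powr r"
  define K2 where "K2 = 2 powr (5/2 - 2*\<beta>) * 2 powr r"
  define K3 where "K3 = 2 powr (2*r) * 2 powr (5/2 - \<beta>) * 3 powr \<bar>r - \<beta>\<bar>"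
  define T1 where "T1 = x powr (\<beta> - 3/2) * y powr (r + \<beta>) * z powr r"
  define T2 where "T2 = z powr (\<beta> - 3/2) * y powr (r + \<beta>) * x powr r"
  define T3 where "T3 = y powr (\<beta> - 3/2) * z powr (r + \<beta>) * x powr r"
  have K: "Kc r \<beta> = K1 + K2 + K3" by (simp add: Kc_def K1_def K2_def K3_def)
  have Kn: "K1 \<ge> 0" "K2 \<ge> 0" "K3 \<ge> 0" using r by (auto simp: K1_def K2_def K3_def)
  have Tn: "T1 \<ge> 0" "T2 \<ge> 0" "T3 \<ge> 0" by (auto simp: T1_def T2_def T3_def)
  have KT: "K1 * T1 + K2 * T2 + K3 * T3 \<le> Kc r \<beta> * (T1 + T2 + T3)"
  proof -
    have "K1 * T1 \<le> Kc r \<beta> * T1" using K Kn Tn by (intro mult_right_mono) auto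
    moreover have "K2 * T2 \<le> Kc r \<beta> * T2" using K Kn Tn by (intro mult_right_mono) auto
    moreover have "K3 * T3 \<le> Kc r \<beta> * T3" using K Kn Tn by (intro mult_right_mono) auto
    ultimately show ?thesis by (simp add: distrib_left)
  qed
  have P: "x powr (2*\<beta> - 5/2) * y * \<bar>z powr (2*r) - y powr (2*r)\<bar> \<le> K1 * T1 + K2 * T2 + K3 * T3"
  proof (cases "x \<le> y / 2")
    case True
    from caseA[OF x1 y1 z1 t1 t2 r b1 True] have "x powr (2*\<beta> - 5/2) * y * \<bar>z powr (2*r) - y powr (2*r)\<bar> \<le> K1 * T1"
      by (simp add: K1_def T1_def)
    then show ?thesis using Kn Tn by (smt (verit) mult_nonneg_nonneg)
  next
    case nA: False
    show ?thesis
    proof (cases "z \<le> y / 2")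
      case True
      from caseB[OF x1 y1 z1 t2 r b1 b2 True] have "x powr (2*\<beta> - 5/2) * y * \<bar>z powr (2*r) - y powr (2*r)\<bar> \<le> K2 * T2"
        by (simp add: K2_def T2_def)
      then show ?thesis using Kn Tn by (smt (verit) mult_nonneg_nonneg)
    next
      case False
      from caseC[OF x1 y1 z1 t1 t3 r b1 b2] nA False
      have "x powr (2*\<beta> - 5/2) * y * \<bar>z powr (2*r) - y powr (2*r)\<bar> \<le> K3 * T3"
        by (simp add: K3_def T3_def)
      then show ?thesis using Kn Tn by (smt (verit) mult_nonneg_nonneg)
    qed
  qed
  show ?thesis using P KT by (simp add: T1_def T2_def T3_def)
qed




lemma powr_sq: "((x::real) powr s)^2 = x powr (2 * s)"
  by (simp add: power2_eq_square pw_add)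

lemma W_sq: "(knorm k powr s * norm (v k))^2 = Vweight s v k"
  by (simp add: Vweight_def power_mult_distrib powr_sq mult.commute)

lemma isf_0: "is_field v \<Longrightarrow> v 0 = 0" by (simp add: is_field_def)

lemma Vnorm_nonneg: "Vnorm s v \<ge> 0"
  unfolding Vnorm_def by (simp add: infsum_nonneg Vweight_def)

lemma UNIV_ins0: "(UNIV :: lattice set) = insert 0 (UNIV - {0})" by auto

lemma Vsum_UNIV:
  assumes "inV s v"
  shows "(Vweight s v has_sum (Vnorm s v)^2) UNIV"
proof -
  have v0: "v 0 = 0" using assms isf_0 by (simp add: inV_def)
  have S: "Vweight s v summable_on (UNIV - {0})" using assms by (simp add: inV_def)
  have n: "infsum (Vweight s v) (UNIV - {0}) \<ge> 0"
    by (rule infsum_nonneg) (simp add: Vweight_def)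
  have "(Vweight s v has_sum infsum (Vweight s v) (UNIV - {0})) (UNIV - {0})"
    using S by simp
  then have "(Vweight s v has_sum infsum (Vweight s v) (UNIV - {0})) UNIV"
    by (subst (asm) has_sum_cong_neutral[where T = UNIV and g = "Vweight s v"]) (auto simp: Vweight_def v0)
  moreover have "(Vnorm s v)^2 = infsum (Vweight s v) (UNIV - {0})"
    using n by (simp add: Vnorm_def)
  ultimately show ?thesis by simp
qed

lemma inV_lower:
  assumes "inV (r + \<beta>) v" "\<beta> > 0"
  shows "inV r v"
proof -
  have "Vweight r v summable_on (UNIV - {0})"
  proof (rule summable_on_comparison_test)
    show "Vweight (r + \<beta>) v summable_on (UNIV - {0})" using assms by (simp add: inV_def)
    fix k :: lattice assume "k \<in> UNIV - {0}"
    then have k1: "knorm k \<ge> 1" using knorm_ge1 by auto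
    have "knorm k powr (2 * r) \<le> knorm k powr (2 * (r + \<beta>))"
      using k1 assms by (intro powr_mono) auto
    then show "Vweight r v k \<le> Vweight (r + \<beta>) v k"
      unfolding Vweight_def by (intro mult_left_mono) auto
    show "0 \<le> Vweight r v k" by (simp add: Vweight_def)
  qed
  then show ?thesis using assms by (simp add: inV_def)
qed

lemma lattice_sum_UNIV:
  assumes "p \<ge> 4" shows "(\<lambda>k. knorm k powr (- p)) summable_on UNIV"
  by (subst UNIV_ins0, subst summable_on_insert_iff) (rule lattice_sum[OF assms])

lemma F1_bound:
  fixes \<beta> :: real
  assumes v: "inV (2 * \<beta>) v" and b: "\<beta> > 1/2"
  defines "F \<equiv> (\<lambda>k. knorm k powr (-3/2 - \<beta>) * (knorm k powr (2*\<beta>) * norm (v k)))"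
  defines "Z \<equiv> (\<Sum>\<^sub>\<infinity>k. knorm k powr (- (3 + 2*\<beta>)))"
  shows "F summable_on UNIV" "(\<Sum>\<^sub>\<infinity>k. F k) \<le> sqrt Z * Vnorm (2*\<beta>) v"
proof -
  define L where "L = (\<lambda>k. knorm k powr (- (3 + 2*\<beta>)))"
  have Ls: "L summable_on UNIV" unfolding L_def using b by (intro lattice_sum_UNIV) auto
  have Lsum: "(L has_sum Z) UNIV" using Ls by (simp add: Z_def L_def)
  have Vs: "(Vweight (2*\<beta>) v has_sum (Vnorm (2*\<beta>) v)^2) UNIV" by (rule Vsum_UNIV[OF v])
  define Q where "Q t = (\<lambda>k. (t * L k + Vweight (2*\<beta>) v k / t) / 2)" for t
  have Qsum: "(Q t has_sum (t * Z + (Vnorm (2*\<beta>) v)^2 / t) / 2) UNIV" for t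
  proof -
    have "((\<lambda>k. t * L k + Vweight (2*\<beta>) v k / t) has_sum (t * Z + (Vnorm (2*\<beta>) v)^2 / t)) UNIV"
      by (intro has_sum_add has_sum_cmult_right Lsum) (use has_sum_cmult_right[OF Vs, of "1/t"] in simp)
    from has_sum_cmult_right[OF this, of "1/2"] show ?thesis by (simp add: Q_def)
  qed
  have pt: "F k \<le> Q t k" if t: "t > 0" for t k
  proof -
    have "1 * knorm k powr (-3/2 - \<beta>) * (knorm k powr (2*\<beta>) * norm (v k))
        \<le> 1 * ((t * (knorm k powr (-3/2 - \<beta>))^2 + (knorm k powr (2*\<beta>) * norm (v k))^2 / t) / 2)"
      by (rule amgm_pt) (use t in auto)
    moreover have "(knorm k powr (-3/2 - \<beta>))^2 = L k" by (simp add: powr_sq L_def)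
    moreover have "(knorm k powr (2*\<beta>) * norm (v k))^2 = Vweight (2*\<beta>) v k" by (rule W_sq)
    ultimately show ?thesis by (simp add: F_def Q_def)
  qed
  have Fn: "F k \<ge> 0" for k by (simp add: F_def)
  show Fs: "F summable_on UNIV"
    by (rule summable_on_comparison_test[of "Q 1"]) (use Qsum pt Fn in \<open>auto simp: summable_on_def\<close>)
  have Z0: "Z \<ge> 0" unfolding Z_def by (rule infsum_nonneg) simp
  have "(\<Sum>\<^sub>\<infinity>k. F k) \<le> sqrt Z * sqrt ((Vnorm (2*\<beta>) v)^2)"
  proof (rule amgm_bound)
    fix t :: real assume t: "t > 0"
    have "(\<Sum>\<^sub>\<infinity>k. F k) \<le> infsum (Q t) UNIV"
      by (rule infsum_mono[OF Fs]) (use Qsum pt t in \<open>auto simp: summable_on_def\<close>)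
    also have "\<dots> = (t * Z + (Vnorm (2*\<beta>) v)^2 / t) / 2" using Qsum[of t] by (simp add: infsumI)
    finally show "(\<Sum>\<^sub>\<infinity>k. F k) \<le> (t * Z + (Vnorm (2*\<beta>) v)^2 / t) / 2" .
  qed (use Z0 in auto)
  also have "\<dots> = sqrt Z * Vnorm (2*\<beta>) v" using Vnorm_nonneg[of "2*\<beta>" v] by simp
  finally show "(\<Sum>\<^sub>\<infinity>k. F k) \<le> sqrt Z * Vnorm (2*\<beta>) v" .
qed




lemma Lam_eq: "v 0 = 0 \<Longrightarrow> Lam s v = (\<lambda>k. knorm k powr s *\<^sub>R v k)"
  by (auto simp: Lam_def fun_eq_iff)

lemma reindex_sigma:
  fixes Y :: "lattice \<times> lattice \<Rightarrow> real"
  shows "(\<lambda>(j,l). Y (- (j + l), l)) summable_on UNIV \<longleftrightarrow> Y summable_on UNIV"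
    and "(\<Sum>\<^sub>\<infinity>(j,l). Y (- (j + l), l)) = infsum Y UNIV"
proof -
  let ?s = "\<lambda>(j::lattice,l::lattice). (- (j + l), l)"
  have a: "?s (?s x) = x" for x by (cases x) (simp add: algebra_simps)
  show "(\<lambda>(j,l). Y (- (j + l), l)) summable_on UNIV \<longleftrightarrow> Y summable_on UNIV"
    by (rule summable_on_reindex_bij_witness[where i = ?s and j = ?s]) (auto simp: a)
  show "(\<Sum>\<^sub>\<infinity>(j,l). Y (- (j + l), l)) = infsum Y UNIV"
    by (rule infsum_reindex_bij_witness[where i = ?s and j = ?s]) (auto simp: a)
qed

lemma reindex_swap:
  fixes Y :: "lattice \<times> lattice \<Rightarrow> real"
  shows "(\<lambda>(j,l). Y (l, j)) summable_on UNIV \<longleftrightarrow> Y summable_on UNIV"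
    and "(\<Sum>\<^sub>\<infinity>(j,l). Y (l, j)) = infsum Y UNIV"
proof -
  let ?s = "\<lambda>(j::lattice,l::lattice). (l, j)"
  have a: "?s (?s x) = x" for x by (cases x) simp
  show "(\<lambda>(j,l). Y (l, j)) summable_on UNIV \<longleftrightarrow> Y summable_on UNIV"
    by (rule summable_on_reindex_bij_witness[where i = ?s and j = ?s]) (auto simp: a)
  show "(\<Sum>\<^sub>\<infinity>(j,l). Y (l, j)) = infsum Y UNIV"
    by (rule infsum_reindex_bij_witness[where i = ?s and j = ?s]) (auto simp: a)
qed

lemma reindex_sigma_c:
  fixes f :: "lattice \<times> lattice \<Rightarrow> complex"
  shows "(\<lambda>(j,l). f (j, - (j + l))) summable_on UNIV \<longleftrightarrow> f summable_on UNIV"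
    and "(\<Sum>\<^sub>\<infinity>(j,l). f (j, - (j + l))) = infsum f UNIV"
proof -
  let ?s = "\<lambda>(j::lattice,l::lattice). (j, - (j + l))"
  have a: "?s (?s x) = x" for x by (cases x) (simp add: algebra_simps)
  show "(\<lambda>(j,l). f (j, - (j + l))) summable_on UNIV \<longleftrightarrow> f summable_on UNIV"
    by (rule summable_on_reindex_bij_witness[where i = ?s and j = ?s]) (auto simp: a)
  show "(\<Sum>\<^sub>\<infinity>(j,l). f (j, - (j + l))) = infsum f UNIV"
    by (rule infsum_reindex_bij_witness[where i = ?s and j = ?s]) (auto simp: a)
qed




lemma pointwise_id:
  fixes a r :: real and v :: field and j l :: lattice
  assumes v0: "v 0 = 0" and dv: "\<And>k. kdot (v k) k = 0"
  defines "u \<equiv> Lam a v" and "w \<equiv> Lam (2*r) v"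
  defines "f \<equiv> (\<lambda>(j,l). \<i> * kdot (u j) l * cdot (v l) (w (- (j + l))))"
  shows "f (j, l) + f (j, - (j + l)) =
     \<i> * kdot (u j) l * cdot (v l) (v (- (j + l))) * of_real (knorm (- (j + l)) powr (2*r) - knorm l powr (2*r))"
proof -
  have U: "u = (\<lambda>k. knorm k powr a *\<^sub>R v k)" unfolding u_def by (rule Lam_eq[of v, OF v0])
  have W: "w = (\<lambda>k. knorm k powr (2*r) *\<^sub>R v k)" unfolding w_def by (rule Lam_eq[of v, OF v0])
  have uj: "kdot (u j) j = 0" by (simp add: U kdot_scale dv)
  have k1: "kdot (u j) (- (j + l)) = - kdot (u j) l"
    by (simp only: kdot_neg kdot_add uj) simp
  have e: "- (j + - (j + l)) = l" by (simp add: algebra_simps)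
  show ?thesis
    unfolding f_def using k1 e
    by (simp add: W cdot_scale cdot_comm[of "v (- j - l)" "v l"] algebra_simps)
qed

lemma F1'_eq: "knorm k powr (-3/2 - \<beta>) * (knorm k powr (2*\<beta>) * n) = knorm k powr (\<beta> - 3/2) * n"
proof -
  have "knorm k powr (-3/2 - \<beta>) * knorm k powr (2*\<beta>) = knorm k powr (\<beta> - 3/2)"
    by (simp add: pw_add)
  then show ?thesis by (metis mult.assoc)
qed




definition Fv :: "real \<Rightarrow> field \<Rightarrow> lattice \<Rightarrow> real" where
  "Fv \<beta> v k = knorm k powr (\<beta> - 3/2) * norm (v k)"
definition Wv :: "real \<Rightarrow> field \<Rightarrow> lattice \<Rightarrow> real" where
  "Wv s v k = knorm k powr s * norm (v k)"
definition TT :: "real \<Rightarrow> real \<Rightarrow> field \<Rightarrow> lattice \<times> lattice \<Rightarrow> real" where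
  "TT r \<beta> v = (\<lambda>(j,l). Fv \<beta> v j * Wv (r+\<beta>) v l * Wv r v (- (j + l))
     + Fv \<beta> v (- (j + l)) * Wv (r+\<beta>) v l * Wv r v j
     + Fv \<beta> v l * Wv (r+\<beta>) v (- (j + l)) * Wv r v j)"

lemma knorm_neg2: "knorm (- a - b) = knorm (a + b)"
  using knorm_neg[of "a + b"] by simp

lemma TT_nonneg: "TT r \<beta> v x \<ge> 0"
  by (cases x) (simp add: TT_def Fv_def Wv_def)

lemma pointwise_bound:
  fixes \<beta> r :: real and v :: field and j l :: lattice
  assumes v0: "v 0 = 0" and r: "r > 0" and b1: "\<beta> > 0" and b2: "\<beta> < 5/4"
  shows "norm (\<i> * kdot (knorm j powr (2*\<beta> - 5/2) *\<^sub>R v j) l * cdot (v l) (v (- (j + l)))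
            * of_real (knorm (- (j + l)) powr (2*r) - knorm l powr (2*r)))
         \<le> Kc r \<beta> * TT r \<beta> v (j, l)"
proof -
  define m where "m = - (j + l)"
  define x where "x = knorm j"
  define y where "y = knorm l"
  define z where "z = knorm m"
  define A where "A = norm (v j)"
  define B where "B = norm (v l)"
  define C where "C = norm (v m)"
  have ABC: "A \<ge> 0" "B \<ge> 0" "C \<ge> 0" by (simp_all add: A_def B_def C_def)
  have Kp: "Kc r \<beta> > 0" using Kc_pos r by blast
  have L: "norm (\<i> * kdot (knorm j powr (2*\<beta> - 5/2) *\<^sub>R v j) l * cdot (v l) (v m)
            * of_real (knorm m powr (2*r) - knorm l powr (2*r)))
        \<le> (x powr (2*\<beta> - 5/2) * y * \<bar>z powr (2*r) - y powr (2*r)\<bar>) * (A * B * C)"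
  proof -
    have n1: "norm (kdot (knorm j powr (2*\<beta> - 5/2) *\<^sub>R v j) l) \<le> x powr (2*\<beta> - 5/2) * A * y"
      using kdot_bound[of "knorm j powr (2*\<beta> - 5/2) *\<^sub>R v j" l]
      by (simp add: x_def y_def A_def)
    have n2: "norm (cdot (v l) (v m)) \<le> B * C" using cdot_bound by (simp add: B_def C_def)
    have "norm (\<i> * kdot (knorm j powr (2*\<beta> - 5/2) *\<^sub>R v j) l * cdot (v l) (v m)
            * of_real (knorm m powr (2*r) - knorm l powr (2*r)))
        = norm (kdot (knorm j powr (2*\<beta> - 5/2) *\<^sub>R v j) l) * norm (cdot (v l) (v m))
           * \<bar>z powr (2*r) - y powr (2*r)\<bar>"
      by (simp only: norm_mult norm_of_real y_def z_def) simp
    also have "\<dots> \<le> (x powr (2*\<beta> - 5/2) * A * y) * (B * C) * \<bar>z powr (2*r) - y powr (2*r)\<bar>"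
      using knorm_nonneg[of l] by (intro mult_mono n1 n2) (auto simp: ABC y_def)
    also have "\<dots> = (x powr (2*\<beta> - 5/2) * y * \<bar>z powr (2*r) - y powr (2*r)\<bar>) * (A * B * C)"
      by (simp add: ac_simps)
    finally show ?thesis .
  qed
  have TTe: "TT r \<beta> v (j, l) = (x powr (\<beta> - 3/2) * y powr (r + \<beta>) * z powr r
              + z powr (\<beta> - 3/2) * y powr (r + \<beta>) * x powr r
              + y powr (\<beta> - 3/2) * z powr (r + \<beta>) * x powr r) * (A * B * C)"
  proof -
    have m2: "- j - l = m" by (simp add: m_def)
    show ?thesis
      by (simp add: TT_def Fv_def Wv_def x_def y_def z_def A_def B_def C_def m2 algebra_simps)
  qed
  show ?thesis
  proof (cases "A = 0 \<or> B = 0 \<or> C = 0")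
    case True
    then have "(x powr (2*\<beta> - 5/2) * y * \<bar>z powr (2*r) - y powr (2*r)\<bar>) * (A * B * C) = 0" by auto
    then show ?thesis using L TT_nonneg[of r \<beta> v "(j,l)"] Kp unfolding m_def
      by (smt (verit) mult_nonneg_nonneg)
  next
    case False
    then have nz: "j \<noteq> 0" "l \<noteq> 0" "m \<noteq> 0" using v0 by (auto simp: A_def B_def C_def)
    have x1: "x \<ge> 1" "y \<ge> 1" "z \<ge> 1" using nz knorm_ge1 by (auto simp: x_def y_def z_def)
    have t1: "z \<le> x + y" unfolding x_def y_def z_def m_def
      using knorm_triangle[of j l] by (simp only: knorm_neg)
    have t2: "y \<le> x + z"
    proof -
      have "l = - (j + m)" by (simp add: m_def)
      then have "knorm l = knorm (j + m)" by (simp add: knorm_neg2)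
      then show ?thesis unfolding x_def y_def z_def using knorm_triangle[of j m] by simp
    qed
    have t3: "x \<le> y + z"
    proof -
      have "j = - (l + m)" by (simp add: m_def)
      then have "knorm j = knorm (l + m)" by (simp add: knorm_neg2)
      then show ?thesis unfolding x_def y_def z_def using knorm_triangle[of l m] by simp
    qed
    from kernel0[OF x1 t1 t2 t3 r b1 b2]
    have "(x powr (2*\<beta> - 5/2) * y * \<bar>z powr (2*r) - y powr (2*r)\<bar>) * (A * B * C)
        \<le> (Kc r \<beta> * (x powr (\<beta> - 3/2) * y powr (r + \<beta>) * z powr r
              + z powr (\<beta> - 3/2) * y powr (r + \<beta>) * x powr r
              + y powr (\<beta> - 3/2) * z powr (r + \<beta>) * x powr r)) * (A * B * C)"
      by (intro mult_right_mono) (auto simp: ABC)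
    then show ?thesis using L unfolding TTe m_def by (simp add: ac_simps)
  qed
qed




lemma Wv_sq_sum:
  assumes "inV s v"
  shows "(\<lambda>k. (Wv s v k)^2) summable_on UNIV" "sqrt (\<Sum>\<^sub>\<infinity>k. (Wv s v k)^2) = Vnorm s v"
proof -
  have e: "(\<lambda>k. (Wv s v k)^2) = Vweight s v" by (simp add: fun_eq_iff Wv_def W_sq)
  have h: "(Vweight s v has_sum (Vnorm s v)^2) UNIV" by (rule Vsum_UNIV[OF assms])
  show "(\<lambda>k. (Wv s v k)^2) summable_on UNIV" unfolding e using h by (auto simp: summable_on_def)
  show "sqrt (\<Sum>\<^sub>\<infinity>k. (Wv s v k)^2) = Vnorm s v" unfolding e using h Vnorm_nonneg[of s v]
    by (simp add: infsumI)
qed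

lemma TT_sum:
  fixes \<beta> r :: real
  assumes v1: "inV (2*\<beta>) v" and v2: "inV (r + \<beta>) v" and b: "\<beta> > 1/2" and r: "r > 0"
  defines "Z \<equiv> (\<Sum>\<^sub>\<infinity>k. knorm k powr (- (3 + 2*\<beta>)))"
  shows "TT r \<beta> v summable_on UNIV"
    and "infsum (TT r \<beta> v) UNIV \<le> 3 * (sqrt Z * Vnorm (2*\<beta>) v) * Vnorm (r+\<beta>) v * Vnorm r v"
proof -
  have v3: "inV r v" using inV_lower[OF v2] b by simp
  define F where "F = Fv \<beta> v"
  have Fe: "F = (\<lambda>k. knorm k powr (-3/2 - \<beta>) * (knorm k powr (2*\<beta>) * norm (v k)))"
    unfolding F_def Fv_def fun_eq_iff F1'_eq by simp
  have Fs: "F summable_on UNIV" and FS: "(\<Sum>\<^sub>\<infinity>k. F k) \<le> sqrt Z * Vnorm (2*\<beta>) v"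
    using F1_bound[OF v1 b] unfolding Fe Z_def by auto
  have Fn: "\<And>k. F k \<ge> 0" by (simp add: F_def Fv_def)
  have Wn: "\<And>s k. Wv s v k \<ge> 0" by (simp add: Wv_def)
  have S0: "(\<Sum>\<^sub>\<infinity>k. F k) \<ge> 0" by (simp add: infsum_nonneg Fn)
  define Y1 where "Y1 = (\<lambda>(j,l). F j * Wv (r+\<beta>) v l * Wv r v (- (j + l)))"
  define Y3 where "Y3 = (\<lambda>(j,l). F j * Wv r v l * Wv (r+\<beta>) v (- (j + l)))"
  have y1: "Y1 summable_on UNIV" "infsum Y1 UNIV \<le> (\<Sum>\<^sub>\<infinity>k. F k) * Vnorm (r+\<beta>) v * Vnorm r v"
    using young[OF Fn Wn Wn Fs Wv_sq_sum(1)[OF v2] Wv_sq_sum(1)[OF v3]]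
    unfolding Y1_def Wv_sq_sum(2)[OF v2] Wv_sq_sum(2)[OF v3] by auto
  have y3: "Y3 summable_on UNIV" "infsum Y3 UNIV \<le> (\<Sum>\<^sub>\<infinity>k. F k) * Vnorm r v * Vnorm (r+\<beta>) v"
    using young[OF Fn Wn Wn Fs Wv_sq_sum(1)[OF v3] Wv_sq_sum(1)[OF v2]]
    unfolding Y3_def Wv_sq_sum(2)[OF v2] Wv_sq_sum(2)[OF v3] by auto
  define Y2 where "Y2 = (\<lambda>(j,l). Y1 (- (j + l), l))"
  define Y3' where "Y3' = (\<lambda>(j,l). Y3 (l, j))"
  have y2: "Y2 summable_on UNIV" "infsum Y2 UNIV = infsum Y1 UNIV"
    unfolding Y2_def using reindex_sigma[of Y1] y1 by auto
  have y3': "Y3' summable_on UNIV" "infsum Y3' UNIV = infsum Y3 UNIV"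
    unfolding Y3'_def using reindex_swap[of Y3] y3 by auto
  have TTe: "TT r \<beta> v = (\<lambda>x. Y1 x + Y2 x + Y3' x)"
  proof
    fix x show "TT r \<beta> v x = Y1 x + Y2 x + Y3' x"
    proof (cases x)
      case (Pair j l)
      have e1: "- (- (j + l) + l) = j" by simp
      have e2: "- (l + j) = - (j + l)" by (simp add: add.commute)
      show ?thesis unfolding Pair TT_def Y1_def Y2_def Y3'_def Y3_def F_def
        by (simp only: case_prod_conv e1 e2) (simp add: ac_simps)
    qed
  qed
  show S: "TT r \<beta> v summable_on UNIV"
    unfolding TTe by (intro summable_on_add y1 y2 y3')
  have "infsum (TT r \<beta> v) UNIV = infsum Y1 UNIV + infsum Y2 UNIV + infsum Y3' UNIV"
    unfolding TTe by (simp add: infsum_add summable_on_add y1 y2 y3')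
  also have "\<dots> \<le> 3 * ((\<Sum>\<^sub>\<infinity>k. F k) * Vnorm (r+\<beta>) v * Vnorm r v)"
    using y1 y2 y3 y3' by (simp add: ac_simps)
  also have "\<dots> \<le> 3 * ((sqrt Z * Vnorm (2*\<beta>) v) * Vnorm (r+\<beta>) v * Vnorm r v)"
    using FS Vnorm_nonneg[of "r+\<beta>" v] Vnorm_nonneg[of r v]
    by (intro mult_left_mono mult_right_mono) auto
  finally show "infsum (TT r \<beta> v) UNIV \<le> 3 * (sqrt Z * Vnorm (2*\<beta>) v) * Vnorm (r+\<beta>) v * Vnorm r v"
    by (simp add: ac_simps)
qed




lemma main_bound:
  fixes \<beta> r :: real and v :: field
  assumes b1: "1/2 < \<beta>" and b2: "\<beta> < 5/4" and r: "r > 0"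
    and v1: "inV (2*\<beta>) v" and v2: "inV (r + \<beta>) v"
  defines "Z \<equiv> (\<Sum>\<^sub>\<infinity>k. knorm k powr (- (3 + 2*\<beta>)))"
  shows "norm (Bpair (Lam (2*\<beta> - 5/2) v) v (Lam (2*r) v))
     \<le> (2*pi)^3 / 2 * Kc r \<beta> * (3 * (sqrt Z * Vnorm (2*\<beta>) v) * Vnorm (r+\<beta>) v * Vnorm r v)"
proof -
  have isf: "is_field v" using v1 by (simp add: inV_def)
  have v0: "v 0 = 0" using isf by (simp add: is_field_def)
  have dv: "\<And>k. kdot (v k) k = 0" using isf by (simp add: is_field_def)
  define u where "u = Lam (2*\<beta> - 5/2) v"
  define w where "w = Lam (2*r) v"
  define f where "f = (\<lambda>(j,l). \<i> * kdot (u j) l * cdot (v l) (w (- (j + l))))"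
  have U: "\<And>j. u j = knorm j powr (2*\<beta> - 5/2) *\<^sub>R v j" unfolding u_def Lam_eq[of v, OF v0] by simp
  have Kp: "Kc r \<beta> > 0" using Kc_pos r by blast
  have TTs: "TT r \<beta> v summable_on UNIV"
    and TTb: "infsum (TT r \<beta> v) UNIV \<le> 3 * (sqrt Z * Vnorm (2*\<beta>) v) * Vnorm (r+\<beta>) v * Vnorm r v"
    using TT_sum[OF v1 v2 b1 r] unfolding Z_def by auto
  have TT0: "infsum (TT r \<beta> v) UNIV \<ge> 0" by (rule infsum_nonneg) (simp add: TT_nonneg)
  have B: "Bpair u v w = (2 * of_real pi)^3 * infsum f UNIV"
    unfolding Bpair_def f_def by simp
  have key: "2 * norm (infsum f UNIV) \<le> Kc r \<beta> * infsum (TT r \<beta> v) UNIV"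
  proof (cases "f summable_on UNIV")
    case False
    then have "infsum f UNIV = 0" by (simp add: infsum_not_exists)
    then show ?thesis using Kp TT0 by simp
  next
    case True
    define g where "g = (\<lambda>(j,l). f (j, - (j + l)))"
    have gs: "g summable_on UNIV" and gi: "infsum g UNIV = infsum f UNIV"
      unfolding g_def using reindex_sigma_c[of f] True by auto
    define h where "h = (\<lambda>x. f x + g x)"
    have hs: "h summable_on UNIV" unfolding h_def by (intro summable_on_add True gs)
    have hi: "infsum h UNIV = 2 * infsum f UNIV"
      unfolding h_def using infsum_add[OF True gs] gi by simp
    have hb: "norm (h x) \<le> Kc r \<beta> * TT r \<beta> v x" for x
    proof (cases x)
      case (Pair j l)
      have "h x = \<i> * kdot (u j) l * cdot (v l) (v (- (j + l)))
          * of_real (knorm (- (j + l)) powr (2*r) - knorm l powr (2*r))"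
        unfolding h_def g_def Pair using pointwise_id[of v "2*\<beta> - 5/2" r j l] v0 dv
        unfolding u_def[symmetric] w_def[symmetric] f_def[symmetric] by simp
      then show ?thesis using pointwise_bound[of v r \<beta> j l] v0 r b2 b1 unfolding Pair U by simp
    qed
    have KTs: "(\<lambda>x. Kc r \<beta> * TT r \<beta> v x) summable_on UNIV"
      by (rule summable_on_cmult_right[OF TTs])
    have hns: "(\<lambda>x. norm (h x)) summable_on UNIV"
      by (rule summable_on_comparison_test[OF KTs]) (use hb in auto)
    have "norm (infsum h UNIV) \<le> infsum (\<lambda>x. norm (h x)) UNIV"
      by (rule norm_infsum_bound) (use hns in simp)
    also have "\<dots> \<le> infsum (\<lambda>x. Kc r \<beta> * TT r \<beta> v x) UNIV"
      by (rule infsum_mono[OF hns KTs]) (use hb in auto)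
    also have "\<dots> = Kc r \<beta> * infsum (TT r \<beta> v) UNIV"
      by (rule infsum_cmult_right')
    finally show ?thesis using hi by (simp add: norm_mult)
  qed
  have "norm (Bpair u v w) = (2*pi)^3 * norm (infsum f UNIV)"
    unfolding B by (simp add: norm_mult norm_power)
  also have "\<dots> \<le> (2*pi)^3 * (Kc r \<beta> * infsum (TT r \<beta> v) UNIV / 2)"
    using key by (intro mult_left_mono) auto
  also have "\<dots> \<le> (2*pi)^3 * (Kc r \<beta> * (3 * (sqrt Z * Vnorm (2*\<beta>) v) * Vnorm (r+\<beta>) v * Vnorm r v) / 2)"
    using TTb Kp by (intro mult_left_mono divide_right_mono) auto
  finally show ?thesis unfolding u_def w_def by (simp add: field_simps)
qed

theorem lemma13:
  fixes \<alpha> \<beta> r :: real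
  assumes "1/2 < \<beta>" and "\<beta> < 5/4" and "\<alpha> + \<beta> = 5/4" and "r > 0"
  shows "\<exists>C>0. \<forall>v. inV (2 * \<beta>) v \<and> inV (r + \<beta>) v \<longrightarrow>
           norm (Bpair (Lam (-2 * \<alpha>) v) v (Lam (2 * r) v))
             \<le> C * Vnorm (2 * \<beta>) v * Vnorm (r + \<beta>) v * Vnorm r v"
proof -
  define Z where "Z = (\<Sum>\<^sub>\<infinity>k. knorm k powr (- (3 + 2*\<beta>)))"
  define C0 where "C0 = (2*pi)^3 / 2 * Kc r \<beta> * 3 * sqrt Z"
  have Z0: "Z \<ge> 0" unfolding Z_def by (rule infsum_nonneg) simp
  have C00: "C0 \<ge> 0" unfolding C0_def using Kc_pos[OF assms(4), of \<beta>] Z0 by simp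
  have a: "-2 * \<alpha> = 2*\<beta> - 5/2" using assms(3) by simp
  show ?thesis
  proof (intro exI[of _ "C0 + 1"] conjI allI impI)
    show "C0 + 1 > 0" using C00 by simp
    fix v assume v: "inV (2 * \<beta>) v \<and> inV (r + \<beta>) v"
    have N: "0 \<le> Vnorm (2 * \<beta>) v * Vnorm (r + \<beta>) v * Vnorm r v"
      by (simp add: Vnorm_nonneg)
    have "norm (Bpair (Lam (-2 * \<alpha>) v) v (Lam (2 * r) v))
        \<le> (2*pi)^3 / 2 * Kc r \<beta> * (3 * (sqrt Z * Vnorm (2*\<beta>) v) * Vnorm (r+\<beta>) v * Vnorm r v)"
      unfolding a Z_def using main_bound[OF assms(1,2,4)] v by blast
    also have "\<dots> = C0 * (Vnorm (2 * \<beta>) v * Vnorm (r + \<beta>) v * Vnorm r v)"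
      by (simp add: C0_def ac_simps)
    also have "\<dots> \<le> (C0 + 1) * (Vnorm (2 * \<beta>) v * Vnorm (r + \<beta>) v * Vnorm r v)"
      using N by (intro mult_right_mono) auto
    finally show "norm (Bpair (Lam (-2 * \<alpha>) v) v (Lam (2 * r) v))
             \<le> (C0 + 1) * Vnorm (2 * \<beta>) v * Vnorm (r + \<beta>) v * Vnorm r v"
      by (simp add: ac_simps)
  qed
qed


end
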